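(* Let $I$ be an instance and let $\sigma+e$ be an $I$-feasible event sequence, where $e$ is a single event. Then for each $I$-feasible event sequence $\sigma'$ that contains all events of $\sigma$ but does not contain $e$, the sequence $\sigma'+e$ is $I$-feasible.
   Context: An instance $I$ consists of finite disjoint sets $R$ (residents) and $H$ (hospitals), a positive integer quota $q_h$ for each $h\in H$, for each $r\in R$ a preference list of $r$ (a sequence of distinct members of $H$, not necessarily all), and for each $h\in H$ a preference list of $h$ (a sequence of distinct members of $R$). A match is a pair $(r,h)\in R\times H$. For a set $M$ of matches, $\mathrm{res}_h M=\{r:(r,h)\in M\}$, $\mathrm{res}\,M=\{r:(r,h)\in M\text{ for some }h\}$. An event is $(r,h)^+$ (proposal) or $(r,h)^-$ (rejection); $+$ denotes concatenation/appending. For an event sequence $\sigma$, $\mathrm{prop}(\sigma)$, $\mathrm{rej}(\sigma)$ are the sets of matches proposed/rejected in $\sigma$ and $\mathrm{tent}(\sigma)=\mathrm{prop}(\sigma)\setminus\mathrm{rej}(\sigma)$. A match $(r,h)\in M$ is ousted from $M$ in $I$ if the list of $h$ in $I$ contains at least $q_h$ residents of $\mathrm{res}_h M$ and either $r$ is not on it or $r$ is preceded on it by at least $q_h$ residents of $\mathrm{res}_h M$. $I$-feasible sequences are defined inductively: the empty sequence is $I$-feasible; if $\sigma$ is $I$-feasible then $\sigma+(r,h)^+$ is $I$-feasible if $r\notin\mathrm{res}\,\mathrm{tent}(\sigma)$, $(r,h)\notin\mathrm{prop}(\sigma)$, $h$ is on the list of $r$ in $I$ and $(r,h')\in\mathrm{rej}(\sigma)$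 for every $h'$ preceding $h$ on it; and $\sigma+(r,h)^-$ is $I$-feasible if $(r,h)$ is ousted from $\mathrm{prop}(\sigma)$ in $I$ and $(r,h)\notin\mathrm{rej}(\sigma)$. *)

theory Defs
  imports Main
begin

text \<open>An instance: residents of type 'r, hospitals of type 'h (so R and H are disjoint).\<close>
record ('r, 'h) inst =
  Res :: "'r set"
  Hos :: "'h set"
  quota :: "'h \<Rightarrow> nat"
  rpref :: "'r \<Rightarrow> 'h list"
  hpref :: "'h \<Rightarrow> 'r list"

definition wf_instance :: "('r, 'h) inst \<Rightarrow> bool" where
  "wf_instance I \<longleftrightarrow> finite (Res I) \<and> finite (Hos I)
     \<and> (\<forall>h \<in> Hos I. quota I h > 0)
     \<and> (\<forall>r \<in> Res I. distinct (rpref I r) \<and> set (rpref I r) \<subseteq> Hos I)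
     \<and> (\<forall>h \<in> Hos I. distinct (hpref I h) \<and> set (hpref I h) \<subseteq> Res I)"

datatype ('r, 'h) event = Prop 'r 'h | Rej 'r 'h

definition res_h :: "'h \<Rightarrow> ('r \<times> 'h) set \<Rightarrow> 'r set" where
  "res_h h M = {r. (r, h) \<in> M}"

definition res :: "('r \<times> 'h) set \<Rightarrow> 'r set" where
  "res M = {r. \<exists>h. (r, h) \<in> M}"

definition props :: "('r, 'h) event list \<Rightarrow> ('r \<times> 'h) set" where
  "props \<sigma> = {(r, h). Prop r h \<in> set \<sigma>}"

definition rejs :: "('r, 'h) event list \<Rightarrow> ('r \<times> 'h) set" where
  "rejs \<sigma> = {(r, h). Rej r h \<in> set \<sigma>}"

definition tent :: "('r, 'h) event list \<Rightarrow> ('r \<times> 'h) set" where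
  "tent \<sigma> = props \<sigma> - rejs \<sigma>"

definition count_in :: "'a list \<Rightarrow> 'a set \<Rightarrow> nat" where
  "count_in xs A = length (filter (\<lambda>x. x \<in> A) xs)"

definition ousted :: "('r, 'h) inst \<Rightarrow> ('r \<times> 'h) set \<Rightarrow> 'r \<Rightarrow> 'h \<Rightarrow> bool" where
  "ousted I M r h \<longleftrightarrow> (r, h) \<in> M
     \<and> count_in (hpref I h) (res_h h M) \<ge> quota I h
     \<and> (r \<notin> set (hpref I h)
        \<or> count_in (takeWhile (\<lambda>x. x \<noteq> r) (hpref I h)) (res_h h M) \<ge> quota I h)"

inductive feasible :: "('r, 'h) inst \<Rightarrow> ('r, 'h) event list \<Rightarrow> bool" for I where
  Nil: "feasible I []"
| PropI: "\<lbrakk> feasible I \<sigma>; r \<notin> res (tent \<sigma>); (r, h) \<notin> props \<sigma>; h \<in> set (rpref I r);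
           \<forall>h' \<in> set (takeWhile (\<lambda>x. x \<noteq> h) (rpref I r)). (r, h') \<in> rejs \<sigma> \<rbrakk>
         \<Longrightarrow> feasible I (\<sigma> @ [Prop r h])"
| RejI: "\<lbrakk> feasible I \<sigma>; ousted I (props \<sigma>) r h; (r, h) \<notin> rejs \<sigma> \<rbrakk>
         \<Longrightarrow> feasible I (\<sigma> @ [Rej r h])"

end

theory Submission
  imports Defs
begin

lemma props_app[simp]: "props (s @ [e]) = props s \<union> (case e of Prop r h \<Rightarrow> {(r,h)} | Rej r h \<Rightarrow> {})"
  by (cases e) (auto simp: props_def)

lemma rejs_app[simp]: "rejs (s @ [e]) = rejs s \<union> (case e of Rej r h \<Rightarrow> {(r,h)} | Prop r h \<Rightarrow> {})"
  by (cases e) (auto simp: rejs_def)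

lemma feas_inv:
  assumes "feasible I s"
  shows "rejs s \<subseteq> props s \<and> (\<forall>r h. Prop r h \<in> set s \<longrightarrow>
           (\<forall>h' \<in> set (takeWhile (\<lambda>x. x \<noteq> h) (rpref I r)). (r, h') \<in> rejs s))"
  using assms
proof induction
  case Nil
  then show ?case by (simp add: rejs_def props_def)
next
  case (PropI \<sigma> r h)
  then show ?case by auto
next
  case (RejI \<sigma> r h)
  then show ?case by (auto simp: ousted_def)
qed

lemma tw_order:
  "h \<in> set xs \<Longrightarrow> h'' \<noteq> h \<Longrightarrow> h'' \<notin> set (takeWhile (\<lambda>x. x \<noteq> h) xs)
   \<Longrightarrow> h \<in> set (takeWhile (\<lambda>x. x \<noteq> h'') xs)"
  by (induction xs) auto

lemma count_in_mono: "A \<subseteq> B \<Longrightarrow> count_in xs A \<le> count_in xs B"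
  unfolding count_in_def by (induction xs) auto

lemma res_h_mono: "A \<subseteq> B \<Longrightarrow> res_h h A \<subseteq> res_h h B"
  unfolding res_h_def by auto

lemma ousted_mono: "ousted I A r h \<Longrightarrow> A \<subseteq> B \<Longrightarrow> ousted I B r h"
proof -
  assume a: "ousted I A r h" "A \<subseteq> B"
  have "\<And>xs. count_in xs (res_h h A) \<le> count_in xs (res_h h B)"
    using count_in_mono[OF res_h_mono[OF a(2)]] by blast
  with a show ?thesis unfolding ousted_def by (meson le_trans subsetD)
qed

theorem proposition1:
  fixes I :: "('r, 'h) inst"
    and \<sigma> \<sigma>' :: "('r, 'h) event list"
    and e :: "('r, 'h) event"
  assumes "wf_instance I"
    and "feasible I (\<sigma> @ [e])"
    and "feasible I \<sigma>'"
    and "set \<sigma> \<subseteq> set \<sigma>'"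
    and "e \<notin> set \<sigma>'"
  shows "feasible I (\<sigma>' @ [e])"
proof -
  have pr: "props \<sigma> \<subseteq> props \<sigma>'" and rj: "rejs \<sigma> \<subseteq> rejs \<sigma>'"
    using assms(4) by (auto simp: props_def rejs_def)
  have inv: "rejs \<sigma>' \<subseteq> props \<sigma>'"
    "\<And>r h. Prop r h \<in> set \<sigma>' \<Longrightarrow> \<forall>h' \<in> set (takeWhile (\<lambda>x. x \<noteq> h) (rpref I r)). (r, h') \<in> rejs \<sigma>'"
    using feas_inv[OF assms(3)] by auto
  show ?thesis
  proof (cases e)
    case (Prop r h)
    from assms(2)[unfolded Prop] have
      h1: "h \<in> set (rpref I r)" and
      h2: "\<forall>h' \<in> set (takeWhile (\<lambda>x. x \<noteq> h) (rpref I r)). (r, h') \<in> rejs \<sigma>"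
      by (cases rule: feasible.cases; auto)+
    have np: "(r, h) \<notin> props \<sigma>'" using assms(5) Prop by (auto simp: props_def)
    have "r \<notin> res (tent \<sigma>')"
    proof
      assume "r \<in> res (tent \<sigma>')"
      then obtain h'' where t: "(r, h'') \<in> props \<sigma>'" "(r, h'') \<notin> rejs \<sigma>'"
        by (auto simp: res_def tent_def)
      hence P: "Prop r h'' \<in> set \<sigma>'" by (auto simp: props_def)
      have "h'' \<in> set (rpref I r)"
      proof -
        from assms(3) P show ?thesis
        proof (induction rule: feasible.induct)
          case (PropI s r' h')
          then show ?case by auto
        qed auto
      qed
      moreover have "h'' \<noteq> h" using t np by auto
      moreover have "h'' \<notin> set (takeWhile (\<lambda>x. x \<noteq> h) (rpref I r))"
        using h2 rj t by auto
      ultimately have "h \<in> set (takeWhile (\<lambda>x. x \<noteq> h'') (rpref I r))"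
        using tw_order h1 by metis
      hence "(r, h) \<in> rejs \<sigma>'" using inv(2)[OF P] by auto
      thus False using inv(1) np by auto
    qed
    moreover have "\<forall>h' \<in> set (takeWhile (\<lambda>x. x \<noteq> h) (rpref I r)). (r, h') \<in> rejs \<sigma>'"
      using h2 rj by auto
    ultimately show ?thesis unfolding Prop
      using feasible.PropI[OF assms(3) _ np h1] by blast
  next
    case (Rej r h)
    from assms(2)[unfolded Rej] have o: "ousted I (props \<sigma>) r h"
      by (cases rule: feasible.cases; auto)
    have nr: "(r, h) \<notin> rejs \<sigma>'" using assms(5) Rej by (auto simp: rejs_def)
    show ?thesis unfolding Rej
      using feasible.RejI[OF assms(3) ousted_mono[OF o pr] nr] .
  qed
qed

end
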